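(* Let $\psi\in C^1(\mathbb{R})$ satisfy: $\psi(0)=1$, $\psi$ is even, there exist $C>0$ and $\delta>1$ with $|\psi(x)|+|x\psi'(x)|\leq C\langle x\rangle^{-\delta}$ for all $x\in\mathbb{R}$, and $A_\psi:=\int_{\mathbb{R}}\psi(x)\,\mathrm{d}x\neq 0$. Let $\mu$ be a probability measure on $\mathbb{R}$. Then: 1. For every continuous function $f$ of compact support, $\lim_{a\to 0}\int(\tilde{\psi}_a*\mu)(x)f(x)\,\mathrm{d}x=A_\psi\int f(x)\,\mathrm{d}\mu(x)$. 2. For every $x\in\mathbb{R}$, $\lim_{a\to 0}(\psi_a*\mu)(x)=\mu(\{x\})$. 3. If $0<\alpha\leq 1$ and $(d_\alpha\mu)(x)$ exists and is finite, then $\lim_{a\to 0}a^{-\alpha}(\psi_a*\mu)(x)=c_\alpha(d_\alpha\mu)(x)$, where $c_\alpha=\int_0^\infty \alpha 2^\alpha y^{\alpha-1}\psi(y)\,\mathrm{d}y$.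
   Context: $\langle x\rangle=(1+x^2)^{1/2}$. For $a>0$, $\psi_a(x)=\psi(x/a)$ and $\tilde{\psi}_a(x)=\frac{1}{a}\psi_a(x)$. The convolution is $(f*\mu)(x)=\int f(x-y)\,\mathrm{d}\mu(y)$. For $0\leq\alpha\leq1$, $(d_\alpha\mu)(x)=\lim_{\varepsilon\downarrow0}\mu((x-\varepsilon,x+\varepsilon))/(2\varepsilon)^\alpha$ whenever this limit exists. Limits $a\to0$ are over $a>0$. *)

theory Defs
  imports "HOL-Probability.Probability"
begin

definition jbr :: "real \<Rightarrow> real" where
  "jbr x = sqrt (1 + x\<^sup>2)"

definition dil :: "(real \<Rightarrow> real) \<Rightarrow> real \<Rightarrow> real \<Rightarrow> real" where
  "dil \<psi> a x = \<psi> (x / a)"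

definition dil_tilde :: "(real \<Rightarrow> real) \<Rightarrow> real \<Rightarrow> real \<Rightarrow> real" where
  "dil_tilde \<psi> a x = (1 / a) * dil \<psi> a x"

definition conv_meas :: "(real \<Rightarrow> real) \<Rightarrow> real measure \<Rightarrow> real \<Rightarrow> real" where
  "conv_meas f \<mu> x = (\<integral>y. f (x - y) \<partial>\<mu>)"

end

theory Submission
  imports Defs
begin

lemma powr_split_integrable:
  fixes g :: "real \<Rightarrow> real"
  assumes g[measurable]: "g \<in> borel_measurable borel" and e: "e > -1" and e': "e' < -1"
    and b1: "\<And>y. 0 < y \<Longrightarrow> y \<le> 1 \<Longrightarrow> \<bar>g y\<bar> \<le> K * y powr e"
    and b2: "\<And>y. 1 < y \<Longrightarrow> \<bar>g y\<bar> \<le> K * y powr e'"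
  shows "set_integrable lborel {0<..} g"
proof -
  have "(\<lambda>t. t powr e) integrable_on {0..1}"
    by (rule integrable_on_powr_from_0) (use e in auto)
  hence "(\<lambda>t. t powr e) absolutely_integrable_on {0..1}"
    by (subst absolutely_integrable_on_iff_nonneg) auto
  hence I1: "set_integrable lborel {0..1} (\<lambda>t. t powr e)"
    unfolding set_integrable_def by (subst (asm) integrable_completion) auto
  have "((\<lambda>t. t powr e') has_integral -(1 powr (e'+1)) / (e'+1)) {1..}"
    by (rule has_integral_powr_to_inf) (use e' in auto)
  hence "(\<lambda>t. t powr e') integrable_on {1..}" by blast
  hence "(\<lambda>t. t powr e') absolutely_integrable_on {1..}"
    by (subst absolutely_integrable_on_iff_nonneg) auto
  hence I2: "set_integrable lborel {1..} (\<lambda>t. t powr e')"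
    unfolding set_integrable_def by (subst (asm) integrable_completion) auto
  have J1: "set_integrable lborel {0<..1} g"
  proof (rule set_integrable_bound[where f="\<lambda>t. K * t powr e"])
    show "set_integrable lborel {0<..1} (\<lambda>t. K * t powr e)"
      by (rule set_integrable_mult_right, rule set_integrable_subset[OF I1]) auto
    show "set_borel_measurable lborel {0<..1} g" unfolding set_borel_measurable_def by measurable
    show "AE x in lborel. x \<in> {0<..1} \<longrightarrow> norm (g x) \<le> norm (K * x powr e)"
      using b1 by (auto intro!: AE_I2) (smt (verit))
  qed
  have J2: "set_integrable lborel {1<..} g"
  proof (rule set_integrable_bound[where f="\<lambda>t. K * t powr e'"])
    show "set_integrable lborel {1<..} (\<lambda>t. K * t powr e')"
      by (rule set_integrable_mult_right, rule set_integrable_subset[OF I2]) auto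
    show "set_borel_measurable lborel {1<..} g" unfolding set_borel_measurable_def by measurable
    show "AE x in lborel. x \<in> {1<..} \<longrightarrow> norm (g x) \<le> norm (K * x powr e')"
      using b2 by (auto intro!: AE_I2) (smt (verit))
  qed
  have "set_integrable lborel ({0<..1} \<union> {1<..}) g"
    by (intro set_integrable_Un J1 J2) auto
  moreover have "{0<..1} \<union> {1<..} = ({0<..} :: real set)" by auto
  ultimately show ?thesis by simp
qed

lemma jbr_ge1: "jbr x \<ge> 1"
  unfolding jbr_def by (rule real_le_rsqrt) simp
lemma jbr_ge2: "jbr x \<ge> \<bar>x\<bar>"
  unfolding jbr_def by (rule real_le_rsqrt) simp
lemma jbr_ge3: "jbr x > 0"
  using jbr_ge1[of x] by simp
lemmas jbr_ge = jbr_ge1 jbr_ge2 jbr_ge3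

context
  fixes \<psi> \<psi>' :: "real \<Rightarrow> real" and C \<delta> :: real
  assumes der: "\<And>x. (\<psi> has_real_derivative \<psi>' x) (at x)"
  and cont': "continuous_on UNIV \<psi>'"
  and Cpos: "C > 0" and dgt: "\<delta> > 1"
  and bnd: "\<And>x. \<bar>\<psi> x\<bar> + \<bar>x * \<psi>' x\<bar> \<le> C * jbr x powr (-\<delta>)"
  and even: "\<And>x. \<psi> (-x) = \<psi> x" and psi0: "\<psi> 0 = 1"
begin

lemma jbr_pow_le1: "jbr x powr (-\<delta>) \<le> 1"
proof -
  have "jbr x powr (-\<delta>) \<le> jbr x powr 0"
    by (rule powr_mono) (use dgt jbr_ge in auto)
  thus ?thesis using jbr_ge(3)[of x] by simp
qed

lemma jbr_pow_le_inv: "x \<noteq> 0 \<Longrightarrow> jbr x powr (-\<delta>) \<le> 1 / \<bar>x\<bar>"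
proof -
  assume x: "x \<noteq> 0"
  have "jbr x powr (-\<delta>) \<le> jbr x powr (-1)"
    by (rule powr_mono) (use dgt jbr_ge in auto)
  also have "\<dots> = 1 / jbr x" using jbr_ge(3)[of x] by (simp add: powr_minus_divide)
  also have "\<dots> \<le> 1 / \<bar>x\<bar>" using x jbr_ge(2)[of x] by (intro divide_left_mono) auto
  finally show ?thesis .
qed

lemma jbr_pow_le_pos: "0 < x \<Longrightarrow> jbr x powr (-\<delta>) \<le> x powr (-\<delta>)"
  by (rule powr_mono2') (use dgt jbr_ge(2)[of x] in auto)

lemma psi_bound: "\<bar>\<psi> x\<bar> \<le> C"
proof -
  have "C * jbr x powr (-\<delta>) \<le> C * 1" by (rule mult_left_mono[OF jbr_pow_le1]) (use Cpos in simp)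
  thus ?thesis using bnd[of x] abs_ge_zero[of "x * \<psi>' x"] by linarith
qed

lemma psi_bound_inv: "x \<noteq> 0 \<Longrightarrow> \<bar>\<psi> x\<bar> \<le> C / \<bar>x\<bar>"
proof -
  assume x: "x \<noteq> 0"
  have "C * jbr x powr (-\<delta>) \<le> C * (1 / \<bar>x\<bar>)" by (rule mult_left_mono[OF jbr_pow_le_inv[OF x]]) (use Cpos in simp)
  thus ?thesis using bnd[of x] abs_ge_zero[of "x * \<psi>' x"] by simp
qed

lemma psi_tail: "0 < y \<Longrightarrow> \<bar>\<psi> y\<bar> \<le> C * y powr (-\<delta>)"
proof -
  assume y: "0 < y"
  have "C * jbr y powr (-\<delta>) \<le> C * y powr (-\<delta>)" by (rule mult_left_mono[OF jbr_pow_le_pos[OF y]]) (use Cpos in simp)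
  thus ?thesis using bnd[of y] abs_ge_zero[of "y * \<psi>' y"] by linarith
qed

lemma dpsi_tail: "0 < y \<Longrightarrow> \<bar>\<psi>' y\<bar> \<le> C * y powr (-\<delta> - 1)"
proof -
  assume y: "0 < y"
  have "C * jbr y powr (-\<delta>) \<le> C * y powr (-\<delta>)" by (rule mult_left_mono[OF jbr_pow_le_pos[OF y]]) (use Cpos in simp)
  hence "y * \<bar>\<psi>' y\<bar> \<le> C * y powr (-\<delta>)"
    using bnd[of y] abs_ge_zero[of "\<psi> y"] y by (simp add: abs_mult)
  also have "y powr (-\<delta>) = y * y powr (-\<delta> - 1)"
    using y by (simp add: powr_diff powr_minus field_simps)
  finally have "y * \<bar>\<psi>' y\<bar> \<le> y * (C * y powr (-\<delta> - 1))" by (simp add: mult_ac)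
  thus ?thesis using y by simp
qed

lemma psi_cont: "continuous_on UNIV \<psi>"
  by (intro continuous_at_imp_continuous_on ballI DERIV_isCont[OF der])

lemma psi_meas[measurable]: "\<psi> \<in> borel_measurable borel"
  by (rule borel_measurable_continuous_onI[OF psi_cont])

lemma dpsi_meas[measurable]: "\<psi>' \<in> borel_measurable borel"
  by (rule borel_measurable_continuous_onI[OF cont'])

lemma psi_tendsto_top: "(\<psi> \<longlongrightarrow> 0) at_top"
proof (rule Lim_null_comparison)
  show "\<forall>\<^sub>F x in at_top. norm (\<psi> x) \<le> C / x"
    using eventually_gt_at_top[of 0]
  proof eventually_elim
    case (elim x)
    thus ?case using psi_bound_inv[of x] by simp
  qed
  show "((\<lambda>x. C / x) \<longlongrightarrow> 0) at_top"
    by (rule tendsto_divide_0[OF tendsto_const filterlim_at_top_imp_at_infinity[OF filterlim_ident]])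
qed


lemma psi_int_pos: "set_integrable lborel {0<..} \<psi>"
proof (rule powr_split_integrable[where e=0 and e'="-\<delta>" and K=C])
  show "\<bar>\<psi> y\<bar> \<le> C * y powr 0" if "0 < y" "y \<le> 1" for y
    using that psi_bound[of y] by simp
  show "\<bar>\<psi> y\<bar> \<le> C * y powr (-\<delta>)" if "1 < y" for y
    using that psi_tail[of y] by simp
qed (use dgt in auto)

lemma psi_integrable: "integrable lborel \<psi>"
proof -
  have i1: "integrable lborel (\<lambda>x. indicator {0<..} x * \<psi> x)"
    using psi_int_pos by (simp add: set_integrable_def)
  have i2: "integrable lborel (\<lambda>x. indicator {0<..} (0 + (-1) * x) * \<psi> (0 + (-1) * x))"
    by (rule lborel_integrable_real_affine[OF i1]) simp
  have "integrable lborel (\<lambda>x. indicator {0<..} x * \<psi> x + indicator {0<..} (0 + (-1) * x) * \<psi> (0 + (-1) * x))"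
    by (rule Bochner_Integration.integrable_add[OF i1 i2])
  moreover have "AE x in lborel. indicator {0<..} x * \<psi> x + indicator {0<..} (0 + (-1) * x) * \<psi> (0 + (-1) * x) = \<psi> x"
    using AE_lborel_singleton[of "0::real"]
  proof eventually_elim
    case (elim x)
    then show ?case using even[of x] by (cases "x > 0") (auto simp: indicator_def)
  qed
  ultimately show ?thesis
    by (subst (asm) integrable_cong_AE) auto
qed

lemma part2:
  assumes prob: "prob_space \<mu>" and sb[measurable_cong]: "sets \<mu> = sets borel"
  shows "((\<lambda>a. conv_meas (dil \<psi> a) \<mu> x) \<longlongrightarrow> measure \<mu> {x}) (at_right 0)"
proof -
  interpret prob_space \<mu> by fact
  have "((\<lambda>b. \<integral>y. \<psi> ((x - y) * b) \<partial>\<mu>) \<longlongrightarrow> \<integral>y. indicator {x} y \<partial>\<mu>) at_top"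
  proof (rule integral_dominated_convergence_at_top[where w="\<lambda>_. C"])
    show "indicator {x} \<in> borel_measurable \<mu>" by measurable
    show "(\<lambda>y. \<psi> ((x - y) * b)) \<in> borel_measurable \<mu>" for b by measurable
    show "integrable \<mu> (\<lambda>_. C)" by simp
    show "\<forall>\<^sub>F b in at_top. AE y in \<mu>. norm (\<psi> ((x - y) * b)) \<le> C"
      using psi_bound by auto
    show "AE y in \<mu>. ((\<lambda>b. \<psi> ((x - y) * b)) \<longlongrightarrow> indicator {x} y) at_top"
    proof (rule AE_I2)
      fix y
      show "((\<lambda>b. \<psi> ((x - y) * b)) \<longlongrightarrow> indicator {x} y) at_top"
      proof (cases "y = x")
        case True
        then show ?thesis using psi0 by simp
      next
        case False
        hence d: "\<bar>x - y\<bar> > 0" by simp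
        have "((\<lambda>b. \<psi> ((x - y) * b)) \<longlongrightarrow> 0) at_top"
        proof (rule Lim_null_comparison)
          show "\<forall>\<^sub>F b in at_top. norm (\<psi> ((x - y) * b)) \<le> (C / \<bar>x - y\<bar>) / b"
            using eventually_gt_at_top[of 0]
          proof eventually_elim
            case (elim b)
            have "norm (\<psi> ((x - y) * b)) \<le> C / \<bar>(x - y) * b\<bar>"
              using psi_bound_inv[of "(x - y) * b"] elim d by auto
            thus ?case using elim by (simp add: abs_mult)
          qed
          show "((\<lambda>b. (C / \<bar>x - y\<bar>) / b) \<longlongrightarrow> 0) at_top"
            by (rule tendsto_divide_0[OF tendsto_const filterlim_at_top_imp_at_infinity[OF filterlim_ident]])
        qed
        thus ?thesis using False by simp
      qed
    qed
  qed
  moreover have "(\<integral>y. indicator {x} y \<partial>\<mu>) = measure \<mu> {x}"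
    using sets_eq_imp_space_eq[OF sb] by simp
  ultimately have "((\<lambda>b. conv_meas (dil \<psi> (inverse b)) \<mu> x) \<longlongrightarrow> measure \<mu> {x}) at_top"
    by (simp add: conv_meas_def dil_def divide_inverse)
  thus ?thesis by (simp add: filterlim_at_right_to_top)
qed

lemma part1:
  assumes prob: "prob_space \<mu>" and sb[measurable_cong]: "sets \<mu> = sets borel"
    and fc: "continuous_on UNIV f" and K: "compact K" and fK: "\<And>x. x \<notin> K \<Longrightarrow> f x = 0"
  shows "((\<lambda>a. \<integral>x. conv_meas (dil_tilde \<psi> a) \<mu> x * f x \<partial>lborel)
          \<longlongrightarrow> (\<integral>x. \<psi> x \<partial>lborel) * (\<integral>x. f x \<partial>\<mu>)) (at_right 0)"
proof -
  interpret prob_space \<mu> by fact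
  interpret P: pair_sigma_finite \<mu> lborel ..
  have fm[measurable]: "f \<in> borel_measurable borel"
    using fc by (rule borel_measurable_continuous_onI)
  have space: "space \<mu> = UNIV" using sets_eq_imp_space_eq[OF sb] by simp
  obtain R0 where R0: "\<And>x. x \<in> K \<Longrightarrow> norm x \<le> R0"
    using compact_imp_bounded[OF K] unfolding bounded_iff by blast
  define R where "R = max R0 1"
  have Rpos: "R > 0" by (simp add: R_def)
  have fR: "f x = 0" if "\<bar>x\<bar> > R" for x
    using fK[of x] R0[of x] that by (force simp: R_def)
  have "compact (f ` K)"
    by (rule compact_continuous_image[OF continuous_on_subset[OF fc] K]) auto
  then obtain B where Bpos: "B > 0" and B0: "\<And>y. y \<in> f ` K \<Longrightarrow> norm y \<le> B"
    using compact_imp_bounded bounded_pos by metis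
  have B: "\<bar>f x\<bar> \<le> B" for x
  proof (cases "x \<in> K")
    case True then show ?thesis using B0[of "f x"] by simp
  next
    case False then show ?thesis using fK[of x] Bpos by simp
  qed
  define G where "G a y = (\<integral>t. \<psi> t * f (y + a * t) \<partial>lborel)" for a y
  define I where "I = (\<integral>x. \<psi> x \<partial>lborel)"
  have eq: "(\<integral>x. conv_meas (dil_tilde \<psi> a) \<mu> x * f x \<partial>lborel) = (\<integral>y. G a y \<partial>\<mu>)" if a: "a > 0" for a
  proof -
    define k where "k y x = (1/a) * \<psi> ((x - y)/a) * f x" for y x
    have kint: "integrable (\<mu> \<Otimes>\<^sub>M lborel) (case_prod k)"
    proof (rule Bochner_Integration.integrable_bound[where f="\<lambda>p. (C/a*B) * indicator (UNIV \<times> {-R..R}) p"])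
      have "emeasure (\<mu> \<Otimes>\<^sub>M lborel) (UNIV \<times> {-R..R}) = emeasure \<mu> UNIV * emeasure lborel {-R..R}"
        by (rule lborel.emeasure_pair_measure_Times) (auto simp: sb)
      also have "\<dots> < \<infinity>" using emeasure_space_1 space Rpos by (simp add: ennreal_mult_less_top emeasure_lborel_Icc)
      finally have "integrable (\<mu> \<Otimes>\<^sub>M lborel) (indicator (UNIV \<times> {-R..R}) :: real \<times> real \<Rightarrow> real)"
        by (intro integrable_real_indicator) (auto simp: sb)
      thus "integrable (\<mu> \<Otimes>\<^sub>M lborel) (\<lambda>p. (C/a*B) * indicator (UNIV \<times> {-R..R}) p)"
        by (rule integrable_mult_right)
      show "case_prod k \<in> borel_measurable (\<mu> \<Otimes>\<^sub>M lborel)"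
        unfolding k_def by measurable
      show "AE p in \<mu> \<Otimes>\<^sub>M lborel. norm (case_prod k p) \<le> norm ((C/a*B) * indicator (UNIV \<times> {-R..R}) p)"
      proof (rule AE_I2, clarify)
        fix y x :: real
        show "norm (k y x) \<le> norm ((C/a*B) * indicator (UNIV \<times> {-R..R}) (y, x))"
        proof (cases "\<bar>x\<bar> > R")
          case True then show ?thesis by (simp add: k_def fR)
        next
          case False
          have "\<bar>k y x\<bar> = (1/a) * (\<bar>\<psi> ((x - y)/a)\<bar> * \<bar>f x\<bar>)" using a by (simp add: k_def abs_mult)
          also have "\<dots> \<le> (1/a) * (C * B)"
            using a Cpos by (intro mult_left_mono mult_mono psi_bound B) auto
          finally have kb: "\<bar>k y x\<bar> \<le> (1/a) * (C * B)" .
          have "x \<in> {-R..R}" using False by auto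
          thus ?thesis using kb a Cpos Bpos by (simp add: abs_mult)
        qed
      qed
    qed
    have "(\<integral>x. conv_meas (dil_tilde \<psi> a) \<mu> x * f x \<partial>lborel) = (\<integral>x. (\<integral>y. k y x \<partial>\<mu>) \<partial>lborel)"
      unfolding conv_meas_def dil_tilde_def dil_def k_def by simp
    also have "\<dots> = (\<integral>y. (\<integral>x. k y x \<partial>lborel) \<partial>\<mu>)"
      by (rule P.Fubini_integral[OF kint])
    also have "\<dots> = (\<integral>y. G a y \<partial>\<mu>)"
    proof (rule Bochner_Integration.integral_cong[OF refl])
      fix y
      have "(\<integral>x. k y x \<partial>lborel) = \<bar>a\<bar> *\<^sub>R (\<integral>t. k y (y + a * t) \<partial>lborel)"
        by (rule lborel_integral_real_affine) (use a in simp)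
      also have "(\<lambda>t. k y (y + a * t)) = (\<lambda>t. (1/a) * (\<psi> t * f (y + a * t)))"
        using a by (auto simp: k_def)
      also have "\<bar>a\<bar> *\<^sub>R (\<integral>t. (1/a) * (\<psi> t * f (y + a * t)) \<partial>lborel) = G a y"
        using a by (simp add: G_def)
      finally show "(\<integral>x. k y x \<partial>lborel) = G a y" .
    qed
    finally show ?thesis .
  qed
  have Gmeas[measurable]: "(\<lambda>y. G a y) \<in> borel_measurable borel" for a
    unfolding G_def by measurable
  have psi_abs: "integrable lborel (\<lambda>t. \<bar>\<psi> t\<bar> * B)"
    by (intro integrable_mult_left integrable_abs psi_integrable)
  have Gbound: "norm (G a y) \<le> (\<integral>t. \<bar>\<psi> t\<bar> * B \<partial>lborel)" for a y
    unfolding G_def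
  proof (rule Bochner_Integration.integral_norm_bound_integral)
    show "integrable lborel (\<lambda>t. \<bar>\<psi> t\<bar> * B)" by (rule psi_abs)
    show "norm (\<psi> t * f (y + a * t)) \<le> \<bar>\<psi> t\<bar> * B" for t
      by (simp add: abs_mult mult_left_mono B)
    then show "integrable lborel (\<lambda>t. \<psi> t * f (y + a * t))"
      using Bpos by (intro Bochner_Integration.integrable_bound[OF psi_abs]) (auto intro!: AE_I2 simp: abs_mult)
  qed
  have Glim: "((\<lambda>b. G (inverse b) y) \<longlongrightarrow> I * f y) at_top" for y
  proof -
    have "((\<lambda>b. \<integral>t. \<psi> t * f (y + inverse b * t) \<partial>lborel) \<longlongrightarrow> \<integral>t. \<psi> t * f y \<partial>lborel) at_top"
    proof (rule integral_dominated_convergence_at_top[where w="\<lambda>t. \<bar>\<psi> t\<bar> * B"])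
      show "(\<lambda>t. \<psi> t * f y) \<in> borel_measurable lborel" by measurable
      show "(\<lambda>t. \<psi> t * f (y + inverse b * t)) \<in> borel_measurable lborel" for b by measurable
      show "integrable lborel (\<lambda>t. \<bar>\<psi> t\<bar> * B)" by (rule psi_abs)
      show "\<forall>\<^sub>F b in at_top. AE t in lborel. norm (\<psi> t * f (y + inverse b * t)) \<le> \<bar>\<psi> t\<bar> * B"
        by (intro always_eventually allI AE_I2) (simp add: abs_mult mult_left_mono B)
      show "AE t in lborel. ((\<lambda>b. \<psi> t * f (y + inverse b * t)) \<longlongrightarrow> \<psi> t * f y) at_top"
      proof (rule AE_I2)
        fix t
        have c: "isCont f y" using fc by (simp add: continuous_on_eq_continuous_at)
        have "((\<lambda>b. y + inverse b * t) \<longlongrightarrow> y + 0 * t) at_top"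
          by (intro tendsto_intros tendsto_inverse_0_at_top filterlim_ident)
        hence "((\<lambda>b. f (y + inverse b * t)) \<longlongrightarrow> f y) at_top"
          using isCont_tendsto_compose[OF c] by simp
        thus "((\<lambda>b. \<psi> t * f (y + inverse b * t)) \<longlongrightarrow> \<psi> t * f y) at_top"
          by (intro tendsto_intros)
      qed
    qed
    thus ?thesis by (simp add: G_def I_def)
  qed
  have "((\<lambda>b. \<integral>y. G (inverse b) y \<partial>\<mu>) \<longlongrightarrow> \<integral>y. I * f y \<partial>\<mu>) at_top"
  proof (rule integral_dominated_convergence_at_top[where w="\<lambda>_. (\<integral>t. \<bar>\<psi> t\<bar> * B \<partial>lborel)"])
    show "(\<lambda>y. I * f y) \<in> borel_measurable \<mu>" by measurable
    show "(\<lambda>y. G (inverse b) y) \<in> borel_measurable \<mu>" for b by measurable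
    show "integrable \<mu> (\<lambda>_. (\<integral>t. \<bar>\<psi> t\<bar> * B \<partial>lborel))" by simp
    show "\<forall>\<^sub>F b in at_top. AE y in \<mu>. norm (G (inverse b) y) \<le> (\<integral>t. \<bar>\<psi> t\<bar> * B \<partial>lborel)"
      using Gbound by auto
    show "AE y in \<mu>. ((\<lambda>b. G (inverse b) y) \<longlongrightarrow> I * f y) at_top"
      using Glim by auto
  qed
  hence lim: "((\<lambda>a. \<integral>y. G a y \<partial>\<mu>) \<longlongrightarrow> I * (\<integral>y. f y \<partial>\<mu>)) (at_right 0)"
    by (simp add: filterlim_at_right_to_top)
  have ev: "\<forall>\<^sub>F a in at_right 0. (\<integral>y. G a y \<partial>\<mu>) = (\<integral>x. conv_meas (dil_tilde \<psi> a) \<mu> x * f x \<partial>lborel)"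
    using eventually_at_right_less[of "0::real"] by eventually_elim (simp add: eq)
  show ?thesis
    using tendsto_cong[OF ev] lim by (simp add: I_def)
qed

lemma dpsi_bdd: obtains M where "M > 0" "\<And>t. t \<in> {0..1} \<Longrightarrow> \<bar>\<psi>' t\<bar> \<le> M"
proof -
  have "compact (\<psi>' ` {0..1})"
    by (rule compact_continuous_image[OF continuous_on_subset[OF cont'] compact_Icc]) auto
  then obtain M where M: "M > 0" "\<And>y. y \<in> \<psi>' ` {0..1} \<Longrightarrow> norm y \<le> M"
    using compact_imp_bounded bounded_pos by metis
  show ?thesis by (rule that[of M]) (use M in auto)
qed

lemma dpsi_pow_int:
  assumes "0 \<le> \<alpha>" "\<alpha> \<le> 1"
  shows "set_integrable lborel {0<..} (\<lambda>t. t powr \<alpha> * \<psi>' t)"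
proof -
  obtain M where M: "M > 0" "\<And>t. t \<in> {0..1} \<Longrightarrow> \<bar>\<psi>' t\<bar> \<le> M" using dpsi_bdd by blast
  show ?thesis
  proof (rule powr_split_integrable[where e=0 and e'="\<alpha> - \<delta> - 1" and K="max M C"])
    show "\<bar>t powr \<alpha> * \<psi>' t\<bar> \<le> max M C * t powr 0" if "0 < t" "t \<le> 1" for t
    proof -
      have "\<bar>t powr \<alpha> * \<psi>' t\<bar> = t powr \<alpha> * \<bar>\<psi>' t\<bar>" by (simp add: abs_mult)
      also have "\<dots> \<le> 1 * M"
        using that assms M(2)[of t] by (intro mult_mono powr_le1) auto
      finally show ?thesis using that by simp
    qed
    show "\<bar>t powr \<alpha> * \<psi>' t\<bar> \<le> max M C * t powr (\<alpha> - \<delta> - 1)" if "1 < t" for t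
    proof -
      have "\<bar>t powr \<alpha> * \<psi>' t\<bar> = t powr \<alpha> * \<bar>\<psi>' t\<bar>" by (simp add: abs_mult)
      also have "\<dots> \<le> t powr \<alpha> * (C * t powr (-\<delta> - 1))"
        using that dpsi_tail[of t] by (intro mult_left_mono) auto
      also have "\<dots> = C * t powr (\<alpha> - \<delta> - 1)"
        using that by (simp add: powr_add[symmetric] algebra_simps)
      also have "\<dots> \<le> max M C * t powr (\<alpha> - \<delta> - 1)"
        by (intro mult_right_mono) auto
      finally show ?thesis .
    qed
  qed (use assms dgt in auto)
qed

lemma dpsi_int: "set_integrable lborel {0<..} \<psi>'"
proof -
  have "set_integrable lborel {0<..} (\<lambda>t. t powr 0 * \<psi>' t)"
    by (rule dpsi_pow_int) auto
  thus ?thesis by (rule set_integrable_cong[THEN iffD1, rotated -1]) auto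
qed

lemma psi_pow_int:
  assumes "0 < \<alpha>" "\<alpha> \<le> 1"
  shows "set_integrable lborel {0<..} (\<lambda>y. y powr (\<alpha> - 1) * \<psi> y)"
proof (rule powr_split_integrable[where e="\<alpha> - 1" and e'="\<alpha> - 1 - \<delta>" and K=C])
  show "\<bar>y powr (\<alpha> - 1) * \<psi> y\<bar> \<le> C * y powr (\<alpha> - 1)" if "0 < y" "y \<le> 1" for y
    using that psi_bound[of y] by (simp add: abs_mult mult_left_mono mult.commute)
  show "\<bar>y powr (\<alpha> - 1) * \<psi> y\<bar> \<le> C * y powr (\<alpha> - 1 - \<delta>)" if "1 < y" for y
  proof -
    have "\<bar>y powr (\<alpha> - 1) * \<psi> y\<bar> = y powr (\<alpha> - 1) * \<bar>\<psi> y\<bar>" by (simp add: abs_mult)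
    also have "\<dots> \<le> y powr (\<alpha> - 1) * (C * y powr (-\<delta>))"
      using that psi_tail[of y] by (intro mult_left_mono) auto
    also have "\<dots> = C * y powr (\<alpha> - 1 - \<delta>)"
      using that by (simp add: powr_add[symmetric])
    finally show ?thesis .
  qed
qed (use assms dgt in auto)

lemma psi_ftc:
  assumes s: "0 \<le> s"
  shows "\<psi> s = - (LBINT t:{s<..}. \<psi>' t)"
proof -
  have ei: "einterval (ereal s) \<infinity> = {s<..}" by (auto simp: einterval_def)
  have "(LBINT t=ereal s..\<infinity>. \<psi>' t) = 0 - \<psi> s"
  proof (rule interval_integral_FTC_integrable)
    show "ereal s < \<infinity>" by simp
    show "(\<psi> has_vector_derivative \<psi>' x) (at x)" for x
      using der[of x] by (simp add: has_real_derivative_iff_has_vector_derivative)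
    show "isCont \<psi>' x" for x
      using cont' by (simp add: continuous_on_eq_continuous_at)
    show "set_integrable lborel (einterval (ereal s) \<infinity>) \<psi>'"
      unfolding ei by (rule set_integrable_subset[OF dpsi_int]) (use s in auto)
    have "(\<psi> \<longlongrightarrow> \<psi> s) (at s)"
      using DERIV_isCont[OF der[of s]] by (simp add: isCont_def)
    hence "(\<psi> \<longlongrightarrow> \<psi> s) (at_right s)"
      by (rule tendsto_mono[OF at_le, rotated]) simp
    thus "((\<psi> \<circ> real_of_ereal) \<longlongrightarrow> \<psi> s) (at_right (ereal s))"
      by (simp add: ereal_tendsto_simps1)
    show "((\<psi> \<circ> real_of_ereal) \<longlongrightarrow> 0) (at_left \<infinity>)"
      using psi_tendsto_top by (simp add: ereal_tendsto_simps1)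
  qed
  moreover have "(LBINT t=ereal s..\<infinity>. \<psi>' t) = (LBINT t:{s<..}. \<psi>' t)"
    by (simp add: interval_lebesgue_integral_def ei)
  ultimately show ?thesis by simp
qed

lemma ibp:
  assumes a0: "0 < \<alpha>" and a1: "\<alpha> \<le> 1"
  shows "(LBINT y:{0<..}. \<alpha> * 2 powr \<alpha> * y powr (\<alpha> - 1) * \<psi> y)
      = - (\<integral>t. indicator {0<..} t * (2 powr \<alpha> * t powr \<alpha> * \<psi>' t) \<partial>lborel)"
proof -
  define c1 where "c1 = \<alpha> * 2 powr \<alpha>"
  define c2 where "c2 = (2::real) powr \<alpha>"
  define f where "f t = c1 * (t powr (\<alpha> - 1) * \<psi> t) + c2 * (t powr \<alpha> * \<psi>' t)" for t
  define F where "F t = c2 * (t powr \<alpha> * \<psi> t)" for t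
  have ei: "einterval 0 \<infinity> = {0<..}" by (auto simp: einterval_def zero_ereal_def)
  have i1: "set_integrable lborel {0<..} (\<lambda>t. c1 * (t powr (\<alpha> - 1) * \<psi> t))"
    using psi_pow_int[OF a0 a1] by simp
  have i2: "set_integrable lborel {0<..} (\<lambda>t. c2 * (t powr \<alpha> * \<psi>' t))"
    using dpsi_pow_int[of \<alpha>] a0 a1 by simp
  have "(LBINT t=0..\<infinity>. f t) = 0 - 0"
  proof (rule interval_integral_FTC_integrable)
    show "(0::ereal) < \<infinity>" by simp
    show "(F has_vector_derivative f x) (at x)" if "0 < ereal x" "ereal x < \<infinity>" for x
    proof -
      from that have x: "x > 0" by (simp add: zero_ereal_def)
      have "(F has_real_derivative f x) (at x)"
        unfolding F_def f_def c1_def c2_def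
        using x by (auto intro!: derivative_eq_intros der simp: algebra_simps)
      thus ?thesis by (simp add: has_real_derivative_iff_has_vector_derivative)
    qed
    show "isCont f x" if "0 < ereal x" "ereal x < \<infinity>" for x
    proof -
      from that have x: "x > 0" by (simp add: zero_ereal_def)
      have c1: "isCont \<psi> x" by (rule DERIV_isCont[OF der])
      have c2: "isCont \<psi>' x" using cont' by (simp add: continuous_on_eq_continuous_at)
      show ?thesis unfolding f_def using x c1 c2 by (intro continuous_intros) auto
    qed
    show "set_integrable lborel (einterval 0 \<infinity>) f"
      unfolding ei f_def by (rule set_integral_add(1)[OF i1 i2])
    have "((\<lambda>t. c2 * (t powr \<alpha> * \<psi> t)) \<longlongrightarrow> c2 * (0 * \<psi> 0)) (at_right 0)"
    proof (intro tendsto_intros)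
      show "((\<lambda>t. t powr \<alpha>) \<longlongrightarrow> 0) (at_right 0)"
        by (rule tendsto_zero_powrI) (auto intro!: tendsto_intros eventually_at_right_less[THEN eventually_mono] simp: a0)
      have "(\<psi> \<longlongrightarrow> \<psi> 0) (at 0)"
        using DERIV_isCont[OF der[of 0]] by (simp add: isCont_def)
      thus "(\<psi> \<longlongrightarrow> \<psi> 0) (at_right 0)"
        by (rule tendsto_mono[OF at_le, rotated]) simp
    qed
    thus "((F \<circ> real_of_ereal) \<longlongrightarrow> 0) (at_right 0)"
      unfolding zero_ereal_def ereal_tendsto_simps1 F_def by simp
    have "(F \<longlongrightarrow> 0) at_top"
    proof (rule Lim_null_comparison)
      show "\<forall>\<^sub>F t in at_top. norm (F t) \<le> c2 * C * t powr (\<alpha> - \<delta>)"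
        using eventually_gt_at_top[of 0]
      proof eventually_elim
        case (elim t)
        have "norm (F t) = c2 * (t powr \<alpha> * \<bar>\<psi> t\<bar>)" by (simp add: F_def c2_def abs_mult)
        also have "\<dots> \<le> c2 * (t powr \<alpha> * (C * t powr (-\<delta>)))"
          using elim psi_tail[of t] by (intro mult_left_mono) (auto simp: c2_def)
        also have "\<dots> = c2 * C * t powr (\<alpha> - \<delta>)"
          using elim by (simp add: powr_add[symmetric])
        finally show ?case .
      qed
      have "((\<lambda>t. t powr (\<alpha> - \<delta>)) \<longlongrightarrow> 0) at_top"
        by (rule tendsto_neg_powr[OF _ filterlim_ident]) (use a1 dgt in simp)
      thus "((\<lambda>t. c2 * C * t powr (\<alpha> - \<delta>)) \<longlongrightarrow> 0) at_top"
        using tendsto_mult_right_zero by blast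
    qed
    thus "((F \<circ> real_of_ereal) \<longlongrightarrow> 0) (at_left \<infinity>)"
      by (simp add: ereal_tendsto_simps1)
  qed
  hence "(LBINT t:{0<..}. f t) = 0"
    by (simp add: interval_lebesgue_integral_def ei)
  hence "(LBINT t:{0<..}. c1 * (t powr (\<alpha> - 1) * \<psi> t)) = - (LBINT t:{0<..}. c2 * (t powr \<alpha> * \<psi>' t))"
    unfolding f_def set_integral_add(2)[OF i1 i2] by simp
  moreover have "(LBINT y:{0<..}. \<alpha> * 2 powr \<alpha> * y powr (\<alpha> - 1) * \<psi> y) = (LBINT t:{0<..}. c1 * (t powr (\<alpha> - 1) * \<psi> t))"
    by (simp add: c1_def mult.assoc)
  moreover have "(\<integral>t. indicator {0<..} t * (2 powr \<alpha> * t powr \<alpha> * \<psi>' t) \<partial>lborel) = (LBINT t:{0<..}. c2 * (t powr \<alpha> * \<psi>' t))"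
  proof -
    have "(\<lambda>t. indicator {0<..} t * (2 powr \<alpha> * t powr \<alpha> * \<psi>' t)) = (\<lambda>t. c2 * (indicator {0<..} t * (t powr \<alpha> * \<psi>' t)))"
      by (auto simp: fun_eq_iff c2_def)
    thus ?thesis by (simp add: set_lebesgue_integral_def)
  qed
  ultimately show ?thesis by simp
qed

lemma part3:
  assumes prob: "prob_space \<mu>" and sb[measurable_cong]: "sets \<mu> = sets borel"
    and a0: "0 < \<alpha>" and a1: "\<alpha> \<le> 1"
    and hyp: "((\<lambda>\<epsilon>. measure \<mu> {x - \<epsilon> <..< x + \<epsilon>} / (2 * \<epsilon>) powr \<alpha>) \<longlongrightarrow> L) (at_right 0)"
  shows "((\<lambda>a. a powr (- \<alpha>) * conv_meas (dil \<psi> a) \<mu> x)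
          \<longlongrightarrow> (LBINT y:{0<..}. \<alpha> * 2 powr \<alpha> * y powr (\<alpha> - 1) * \<psi> y) * L) (at_right 0)"
proof -
  interpret prob_space \<mu> by fact
  interpret P: pair_sigma_finite \<mu> lborel ..
  have space: "space \<mu> = UNIV" using sets_eq_imp_space_eq[OF sb] by simp
  define F where "F r = measure \<mu> {x - r <..< x + r}" for r
  define g where "g r = F r / (2 * r) powr \<alpha>" for r
  have Fmono: "mono F"
  proof (rule monoI)
    fix r r' :: real assume "r \<le> r'"
    hence "{x - r <..< x + r} \<subseteq> {x - r' <..< x + r'}" by auto
    thus "F r \<le> F r'" unfolding F_def by (intro finite_measure_mono) (auto simp: sb)
  qed
  have Fm[measurable]: "F \<in> borel_measurable borel" by (rule borel_measurable_mono[OF Fmono])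
  have gm[measurable]: "g \<in> borel_measurable borel" unfolding g_def by measurable
  have F1: "0 \<le> F r" "F r \<le> 1" for r unfolding F_def by auto
  obtain Mg where Mg: "\<And>r. r > 0 \<Longrightarrow> \<bar>g r\<bar> \<le> Mg"
  proof -
    have "\<forall>\<^sub>F r in at_right 0. dist (g r) L < 1"
      using tendstoD[OF hyp[folded F_def, folded g_def], of 1] by (simp add: g_def F_def)
    then obtain b where b: "b > 0" "\<And>r. r > 0 \<Longrightarrow> r < b \<Longrightarrow> dist (g r) L < 1"
      unfolding eventually_at_right_field by auto
    have "\<bar>g r\<bar> \<le> max (\<bar>L\<bar> + 1) (1 / (2 * b) powr \<alpha>)" if r: "r > 0" for r
    proof (cases "r < b")
      case True
      then show ?thesis using b(2)[OF r True] by (simp add: dist_real_def)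
    next
      case False
      have pos: "(2 * b) powr \<alpha> > 0" using b by simp
      have le: "(2 * b) powr \<alpha> \<le> (2 * r) powr \<alpha>" using False b a0 by (intro powr_mono2) auto
      have "\<bar>g r\<bar> = F r / (2 * r) powr \<alpha>" using F1[of r] by (simp add: g_def)
      also have "\<dots> \<le> 1 / (2 * r) powr \<alpha>" using F1[of r] r by (intro divide_right_mono) auto
      also have "\<dots> \<le> 1 / (2 * b) powr \<alpha>" using pos le r by (intro divide_left_mono mult_pos_pos) auto
      finally show ?thesis by simp
    qed
    thus ?thesis using that by blast
  qed
  define \<Phi> where "\<Phi> t = indicator {0<..} t * (2 powr \<alpha> * t powr \<alpha> * \<psi>' t)" for t
  have \<Phi>m[measurable]: "\<Phi> \<in> borel_measurable borel" unfolding \<Phi>_def by measurable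
  have \<Phi>int: "integrable lborel \<Phi>"
  proof -
    have "set_integrable lborel {0<..} (\<lambda>t. 2 powr \<alpha> * (t powr \<alpha> * \<psi>' t))"
      using dpsi_pow_int[of \<alpha>] a0 a1 by simp
    thus ?thesis unfolding set_integrable_def \<Phi>_def by (simp add: mult.assoc)
  qed
  have rep: "a powr (- \<alpha>) * conv_meas (dil \<psi> a) \<mu> x = - (\<integral>t. \<Phi> t * g (a * t) \<partial>lborel)" if a: "a > 0" for a
  proof -
    define h where "h y t = indicator {0<..} t * \<psi>' t * indicator {x - a * t <..< x + a * t} y" for y t :: real
    have hm: "case_prod h \<in> borel_measurable (\<mu> \<Otimes>\<^sub>M lborel)"
    proof -
      have "case_prod h = (\<lambda>p. indicator {0<..} (snd p) * \<psi>' (snd p) * (if x - a * snd p < fst p \<and> fst p < x + a * snd p then 1 else 0))"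
        by (auto simp: fun_eq_iff h_def indicator_def)
      also have "\<dots> \<in> borel_measurable (\<mu> \<Otimes>\<^sub>M lborel)" by measurable
      finally show ?thesis .
    qed
    have dint: "integrable lborel (\<lambda>t. indicator {0<..} t * \<bar>\<psi>' t\<bar>)"
      using set_integrable_abs[OF dpsi_int] by (simp add: set_integrable_def)
    have dom: "integrable (\<mu> \<Otimes>\<^sub>M lborel) (\<lambda>p. indicator {0<..} (snd p) * \<bar>\<psi>' (snd p)\<bar>)"
    proof (rule P.Fubini_integrable)
      show "(\<lambda>p. indicator {0<..} (snd p) * \<bar>\<psi>' (snd p)\<bar>) \<in> borel_measurable (\<mu> \<Otimes>\<^sub>M lborel)"
        by measurable
      show "integrable \<mu> (\<lambda>y. \<integral>t. norm (indicator {0<..} (snd (y, t)) * \<bar>\<psi>' (snd (y, t))\<bar>) \<partial>lborel)"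
        by simp
      show "AE y in \<mu>. integrable lborel (\<lambda>t. indicator {0<..} (snd (y, t)) * \<bar>\<psi>' (snd (y, t))\<bar>)"
        using dint by simp
    qed
    have hint: "integrable (\<mu> \<Otimes>\<^sub>M lborel) (case_prod h)"
    proof (rule Bochner_Integration.integrable_bound[OF dom hm])
      show "AE p in \<mu> \<Otimes>\<^sub>M lborel. norm (case_prod h p) \<le> norm (indicator {0<..} (snd p) * \<bar>\<psi>' (snd p)\<bar>)"
        by (intro AE_I2) (auto simp: h_def indicator_def abs_mult)
    qed
    have pt: "\<psi> ((x - y) / a) = - (\<integral>t. h y t \<partial>lborel)" for y
    proof -
      define s where "s = \<bar>x - y\<bar> / a"
      have s0: "0 \<le> s" using a by (simp add: s_def)
      have "\<psi> ((x - y) / a) = \<psi> s"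
        using even[of "(x - y) / a"] a by (cases "x - y \<ge> 0") (auto simp: s_def minus_divide_left)
      also have "\<dots> = - (LBINT t:{s<..}. \<psi>' t)" by (rule psi_ftc[OF s0])
      also have "(LBINT t:{s<..}. \<psi>' t) = (\<integral>t. h y t \<partial>lborel)"
        unfolding set_lebesgue_integral_def
      proof (rule Bochner_Integration.integral_cong[OF refl])
        fix t
        have e1: "(s < t) = (\<bar>x - y\<bar> < a * t)"
          using a by (simp add: s_def pos_divide_less_eq mult.commute)
        have e2: "(\<bar>x - y\<bar> < a * t) = (0 < a * t \<and> x - a * t < y \<and> y < x + a * t)"
          by (auto simp: abs_less_iff)
        have e3: "(0 < a * t) = (0 < t)" using a by (simp add: zero_less_mult_iff)
        have "(s < t) = (0 < t \<and> x - a * t < y \<and> y < x + a * t)"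
          using e1 e2 e3 by simp
        thus "indicator {s<..} t *\<^sub>R \<psi>' t = h y t"
          by (auto simp: h_def indicator_def)
      qed
      finally show ?thesis .
    qed
    have "conv_meas (dil \<psi> a) \<mu> x = (\<integral>y. - (\<integral>t. h y t \<partial>lborel) \<partial>\<mu>)"
      unfolding conv_meas_def dil_def using pt by simp
    also have "\<dots> = - (\<integral>y. (\<integral>t. h y t \<partial>lborel) \<partial>\<mu>)" by simp
    also have "(\<integral>y. (\<integral>t. h y t \<partial>lborel) \<partial>\<mu>) = (\<integral>t. (\<integral>y. h y t \<partial>\<mu>) \<partial>lborel)"
      by (rule P.Fubini_integral[OF hint, symmetric])
    also have "\<dots> = (\<integral>t. indicator {0<..} t * \<psi>' t * F (a * t) \<partial>lborel)"
      by (simp add: h_def F_def space)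
    finally have "a powr (- \<alpha>) * conv_meas (dil \<psi> a) \<mu> x = - (\<integral>t. a powr (- \<alpha>) * (indicator {0<..} t * \<psi>' t * F (a * t)) \<partial>lborel)"
      by simp
    also have "(\<integral>t. a powr (- \<alpha>) * (indicator {0<..} t * \<psi>' t * F (a * t)) \<partial>lborel) = (\<integral>t. \<Phi> t * g (a * t) \<partial>lborel)"
    proof (rule Bochner_Integration.integral_cong[OF refl])
      fix t
      show "a powr (- \<alpha>) * (indicator {0<..} t * \<psi>' t * F (a * t)) = \<Phi> t * g (a * t)"
      proof (cases "t > 0")
        case True
        have "(2 * (a * t)) powr \<alpha> = a powr \<alpha> * (2 powr \<alpha> * t powr \<alpha>)"
          using True a by (simp add: powr_mult)
        moreover have "a powr (- \<alpha>) = 1 / a powr \<alpha>" using a by (simp add: powr_minus_divide)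
        moreover have "2 powr \<alpha> * t powr \<alpha> > 0" "a powr \<alpha> > 0" using True a by auto
        ultimately show ?thesis using True by (simp add: \<Phi>_def g_def field_simps)
      qed (simp add: \<Phi>_def)
    qed
    finally show ?thesis .
  qed
  have "((\<lambda>b. \<integral>t. \<Phi> t * g (inverse b * t) \<partial>lborel) \<longlongrightarrow> \<integral>t. \<Phi> t * L \<partial>lborel) at_top"
  proof (rule integral_dominated_convergence_at_top[where w="\<lambda>t. \<bar>\<Phi> t\<bar> * Mg"])
    show "(\<lambda>t. \<Phi> t * L) \<in> borel_measurable lborel" by measurable
    show "(\<lambda>t. \<Phi> t * g (inverse b * t)) \<in> borel_measurable lborel" for b by measurable
    show "integrable lborel (\<lambda>t. \<bar>\<Phi> t\<bar> * Mg)"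
      by (intro integrable_mult_left integrable_abs \<Phi>int)
    show "\<forall>\<^sub>F b in at_top. AE t in lborel. norm (\<Phi> t * g (inverse b * t)) \<le> \<bar>\<Phi> t\<bar> * Mg"
      using eventually_gt_at_top[of 0]
    proof eventually_elim
      case (elim b)
      show ?case
      proof (rule AE_I2)
        fix t
        show "norm (\<Phi> t * g (inverse b * t)) \<le> \<bar>\<Phi> t\<bar> * Mg"
        proof (cases "t > 0")
          case True
          hence "\<bar>g (inverse b * t)\<bar> \<le> Mg" using elim by (intro Mg) auto
          thus ?thesis by (simp add: abs_mult mult_left_mono)
        qed (simp add: \<Phi>_def)
      qed
    qed
    show "AE t in lborel. ((\<lambda>b. \<Phi> t * g (inverse b * t)) \<longlongrightarrow> \<Phi> t * L) at_top"
    proof (rule AE_I2)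
      fix t
      show "((\<lambda>b. \<Phi> t * g (inverse b * t)) \<longlongrightarrow> \<Phi> t * L) at_top"
      proof (cases "t > 0")
        case True
        have "((\<lambda>b. inverse b * t) \<longlongrightarrow> 0 * t) at_top"
          by (intro tendsto_intros tendsto_inverse_0_at_top filterlim_ident)
        have "filterlim (\<lambda>b. inverse b * t) (at_right 0) at_top"
        proof (rule tendsto_imp_filterlim_at_right)
          show "((\<lambda>b. inverse b * t) \<longlongrightarrow> 0) at_top" using \<open>((\<lambda>b. inverse b * t) \<longlongrightarrow> 0 * t) at_top\<close> by simp
          show "\<forall>\<^sub>F b in at_top. 0 < inverse b * t"
            using eventually_gt_at_top[of "0::real"] by eventually_elim (use True in simp)
        qed
        from filterlim_compose[OF hyp[folded F_def, folded g_def] this]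
        have "((\<lambda>b. g (inverse b * t)) \<longlongrightarrow> L) at_top"
          by (simp add: g_def F_def)
        thus ?thesis by (intro tendsto_intros)
      qed (simp add: \<Phi>_def)
    qed
  qed
  hence lim1: "((\<lambda>a. - (\<integral>t. \<Phi> t * g (a * t) \<partial>lborel)) \<longlongrightarrow> - (\<integral>t. \<Phi> t * L \<partial>lborel)) (at_right 0)"
    unfolding filterlim_at_right_to_top[of _ _ ] by (intro tendsto_minus) simp
  have eqV: "- (\<integral>t. \<Phi> t * L \<partial>lborel) = (LBINT y:{0<..}. \<alpha> * 2 powr \<alpha> * y powr (\<alpha> - 1) * \<psi> y) * L"
    using ibp[OF a0 a1] by (simp add: \<Phi>_def)
  have ev: "\<forall>\<^sub>F a in at_right 0. - (\<integral>t. \<Phi> t * g (a * t) \<partial>lborel) = a powr (- \<alpha>) * conv_meas (dil \<psi> a) \<mu> x"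
    using eventually_at_right_less[of "0::real"]
  proof eventually_elim
    case (elim a)
    show ?case using rep[OF elim] by simp
  qed
  show ?thesis
    using tendsto_cong[OF ev, THEN iffD1, OF lim1] unfolding eqV .
qed

end

theorem theorem2p2:
  fixes \<psi> :: "real \<Rightarrow> real" and \<mu> :: "real measure"
  assumes C1: "\<psi> C1_differentiable_on UNIV"
    and psi0: "\<psi> 0 = 1"
    and even: "\<And>x. \<psi> (- x) = \<psi> x"
    and decay: "\<exists>C>0. \<exists>\<delta>>1. \<forall>x. \<bar>\<psi> x\<bar> + \<bar>x * deriv \<psi> x\<bar> \<le> C * jbr x powr (- \<delta>)"
    and Apsi: "(\<integral>x. \<psi> x \<partial>lborel) \<noteq> 0"
    and prob: "prob_space \<mu>"
    and borel: "sets \<mu> = sets borel"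
  shows
    "(\<forall>f :: real \<Rightarrow> real. continuous_on UNIV f \<and> (\<exists>K. compact K \<and> (\<forall>x. x \<notin> K \<longrightarrow> f x = 0)) \<longrightarrow>
        ((\<lambda>a. \<integral>x. conv_meas (dil_tilde \<psi> a) \<mu> x * f x \<partial>lborel)
          \<longlongrightarrow> (\<integral>x. \<psi> x \<partial>lborel) * (\<integral>x. f x \<partial>\<mu>)) (at_right 0))
   \<and> (\<forall>x. ((\<lambda>a. conv_meas (dil \<psi> a) \<mu> x) \<longlongrightarrow> measure \<mu> {x}) (at_right 0))
   \<and> (\<forall>\<alpha> x L. 0 < \<alpha> \<and> \<alpha> \<le> 1 \<and>
        ((\<lambda>\<epsilon>. measure \<mu> {x - \<epsilon> <..< x + \<epsilon>} / (2 * \<epsilon>) powr \<alpha>) \<longlongrightarrow> L) (at_right 0) \<longrightarrow>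
        ((\<lambda>a. a powr (- \<alpha>) * conv_meas (dil \<psi> a) \<mu> x)
          \<longlongrightarrow> (LBINT y:{0<..}. \<alpha> * 2 powr \<alpha> * y powr (\<alpha> - 1) * \<psi> y) * L) (at_right 0))"
proof -
  obtain D where D: "\<And>x. (\<psi> has_vector_derivative D x) (at x)" and Dc: "continuous_on UNIV D"
    using C1 unfolding C1_differentiable_on_def by blast
  have der: "\<And>x. (\<psi> has_real_derivative D x) (at x)"
    using D by (simp add: has_real_derivative_iff_has_vector_derivative)
  have dd: "deriv \<psi> x = D x" for x using DERIV_imp_deriv[OF der] .
  obtain C \<delta> where Cpos: "C > 0" and dgt: "\<delta> > 1"
    and bnd0: "\<And>x. \<bar>\<psi> x\<bar> + \<bar>x * deriv \<psi> x\<bar> \<le> C * jbr x powr (- \<delta>)"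
    using decay by blast
  have bnd: "\<And>x. \<bar>\<psi> x\<bar> + \<bar>x * D x\<bar> \<le> C * jbr x powr (- \<delta>)"
    using bnd0 by (simp add: dd)
  note ctx = der Dc Cpos dgt bnd even psi0
  show ?thesis
  proof (intro conjI allI impI)
    fix f :: "real \<Rightarrow> real"
    assume "continuous_on UNIV f \<and> (\<exists>K. compact K \<and> (\<forall>x. x \<notin> K \<longrightarrow> f x = 0))"
    then obtain K where fc: "continuous_on UNIV f" and K: "compact K" and fK: "\<And>x. x \<notin> K \<Longrightarrow> f x = 0"
      by blast
    show "((\<lambda>a. \<integral>x. conv_meas (dil_tilde \<psi> a) \<mu> x * f x \<partial>lborel)
          \<longlongrightarrow> (\<integral>x. \<psi> x \<partial>lborel) * (\<integral>x. f x \<partial>\<mu>)) (at_right 0)"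
      by (rule part1[OF ctx prob borel fc K fK])
  next
    fix x
    show "((\<lambda>a. conv_meas (dil \<psi> a) \<mu> x) \<longlongrightarrow> measure \<mu> {x}) (at_right 0)"
      by (rule part2[OF ctx prob borel])
  next
    fix \<alpha> x L
    assume h: "0 < \<alpha> \<and> \<alpha> \<le> 1 \<and>
        ((\<lambda>\<epsilon>. measure \<mu> {x - \<epsilon> <..< x + \<epsilon>} / (2 * \<epsilon>) powr \<alpha>) \<longlongrightarrow> L) (at_right 0)"
    show "((\<lambda>a. a powr (- \<alpha>) * conv_meas (dil \<psi> a) \<mu> x)
          \<longlongrightarrow> (LBINT y:{0<..}. \<alpha> * 2 powr \<alpha> * y powr (\<alpha> - 1) * \<psi> y) * L) (at_right 0)"
      using h by (intro part3[OF ctx prob borel]) auto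
  qed
qed

end
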